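(* For every integer $n\ge 3$, let $\beta_1,\dots,\beta_n$ be the eigenvalues of $L_S$ (all positive). Then $$\sum_{i=1}^{n}\frac{1}{\beta_{i}}=\frac{n}{2\sqrt{3}}\cdot\frac{p^{n}-q^{n}}{p^{n}+q^{n}+2}.$$
   Context: $p=2+\sqrt3$, $q=2-\sqrt3$. $L_S$ denotes the $n\times n$ matrix with all diagonal entries equal to $4$, entries $(i,i+1)$ and $(i+1,i)$ equal to $-1$ for $1\le i\le n-1$, entries $(1,n)$ and $(n,1)$ equal to $+1$, and all other entries $0$. *)

theory Defs
  imports "Jordan_Normal_Form.Char_Poly" "HOL-Computational_Algebra.Polynomial"
begin

definition p_const :: real where "p_const = 2 + sqrt 3"
definition q_const :: real where "q_const = 2 - sqrt 3"

text \<open>The n x n matrix L_S, indices 0..n-1 (shifted from 1..n).\<close>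
definition L_S :: "nat \<Rightarrow> real mat" where
  "L_S n = mat n n (\<lambda>(i, j).
     if i = j then 4
     else if j = i + 1 \<or> i = j + 1 then -1
     else if (i = 0 \<and> j = n - 1) \<or> (i = n - 1 \<and> j = 0) then 1
     else 0)"

definition eigenvalues_mset :: "real mat \<Rightarrow> real multiset" where
  "eigenvalues_mset A = proots (char_poly A)"

end

theory Submission
  imports Defs "Jordan_Normal_Form.Schur_Decomposition"
begin

lemma L_entry:
  assumes n: "n \<ge> 3" and i: "i < n" and k: "k < n"
  shows "L_S n $$ (i,k) = (if k=i then 4 else 0) + (if k = i+1 then -1 else 0) + (if i = k+1 then -1 else 0)
     + (if i=0 \<and> k = n-1 then 1 else 0) + (if i = n-1 \<and> k = 0 then 1 else 0)"
  using assms unfolding L_S_def by auto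

lemma row_sum:
  fixes f :: "nat \<Rightarrow> real"
  assumes n: "n \<ge> 3" and i: "i < n"
  shows "(\<Sum>k<n. L_S n $$ (i,k) * f k) = 4 * f i - (if i+1 < n then f (i+1) else 0) - (if i > 0 then f (i-1) else 0)
     + (if i = 0 then f (n-1) else 0) + (if i = n-1 then f 0 else 0)"
proof -
  have ife: "\<And>c a x. (if c then a else 0) * x = (if c then a * x else (0::real))" by simp
  have "(\<Sum>k<n. L_S n $$ (i,k) * f k) = (\<Sum>k<n. (if k=i then 4 * f k else 0) + (if k = i+1 then - 1 * f k else 0) + (if 0 < i \<and> k = i - 1 then - 1 * f k else 0)
     + (if i=0 \<and> k = n-1 then 1 * f k else 0) + (if i = n-1 \<and> k = 0 then 1 * f k else 0))"
  proof (rule sum.cong[OF refl])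
    fix k assume "k \<in> {..<n}"
    hence k: "k < n" by simp
    have e: "(i = k + 1) = (0 < i \<and> k = i - 1)" by auto
    show "L_S n $$ (i,k) * f k = (if k=i then 4 * f k else 0) + (if k = i+1 then - 1 * f k else 0) + (if 0 < i \<and> k = i - 1 then - 1 * f k else 0)
     + (if i=0 \<and> k = n-1 then 1 * f k else 0) + (if i = n-1 \<and> k = 0 then 1 * f k else 0)"
      unfolding L_entry[OF n i k] distrib_right ife e ..
  qed
  also have "\<dots> = (\<Sum>k<n. (if k=i then 4 * f k else 0)) + (\<Sum>k<n. (if k = i+1 then - 1 * f k else 0)) + (\<Sum>k<n. (if 0 < i \<and> k = i - 1 then - 1 * f k else 0))
     + (\<Sum>k<n. (if i=0 \<and> k = n-1 then 1 * f k else 0)) + (\<Sum>k<n. (if i = n-1 \<and> k = 0 then 1 * f k else 0))"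
    by (simp only: sum.distrib)
  also have "(\<Sum>k<n. (if k=i then 4 * f k else 0)) = 4 * f i" using i by (simp add: sum.delta')
  also have "(\<Sum>k<n. (if k=i+1 then - 1 * f k else 0)) = - (if i+1 < n then f (i+1) else 0)" by (simp add: sum.delta')
  also have "(\<Sum>k<n. (if 0 < i \<and> k = i - 1 then - 1 * f k else 0)) = - (if i > 0 then f (i-1) else 0)"
    using i by (cases "0 < i") (simp_all add: sum.delta')
  also have "(\<Sum>k<n. (if i=0 \<and> k = n-1 then 1 * f k else 0)) = (if i = 0 then f (n-1) else 0)"
    using n by (cases "i = 0") (simp_all add: sum.delta')
  also have "(\<Sum>k<n. (if i = n-1 \<and> k = 0 then 1 * f k else 0)) = (if i = n-1 then f 0 else 0)"
    using n by (cases "i = n-1") (simp_all add: sum.delta')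
  finally show ?thesis by simp
qed

lemma pq1: "p_const * q_const = 1"
  unfolding p_const_def q_const_def by (simp add: algebra_simps)
lemma q_pos: "q_const > 0"
  proof -
  have "sqrt 3 < 2" by (rule real_less_lsqrt) auto
  thus ?thesis unfolding q_const_def by simp
qed

definition hK :: "nat \<Rightarrow> real" where "hK n = -1/(2*sqrt 3*(1+q_const^n))"
definition hh :: "nat \<Rightarrow> nat \<Rightarrow> real" where "hh n d = hK n * (q_const^n * p_const^d - q_const^d)"
definition Minv :: "nat \<Rightarrow> real mat" where
  "Minv n = mat n n (\<lambda>(i,j). hh n (if j \<le> i then i - j else j - i))"

lemma R1: "4 * hh n (Suc d) - hh n d - hh n (Suc (Suc d)) = 0"
proof -
  have p2: "p_const^2 = 4*p_const - 1" and q2: "q_const^2 = 4*q_const - 1"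
    unfolding p_const_def q_const_def by (simp_all add: power2_eq_square algebra_simps)
  have a: "p_const^(Suc (Suc d)) = p_const^d * p_const^2" "q_const^(Suc (Suc d)) = q_const^d * q_const^2"
    by (simp_all add: power2_eq_square)
  show ?thesis unfolding hh_def a p2 q2 by (simp add: algebra_simps)
qed

lemma R2: "4 * hh n 0 - 2 * hh n 1 = 1"
proof -
  have "1 + q_const^n > 0" using q_pos by (simp add: add_pos_nonneg)
  moreover have "4 * hh n 0 - 2 * hh n 1 = hK n * (-(2*sqrt 3) * (1 + q_const^n))"
    unfolding hh_def p_const_def q_const_def by (simp add: algebra_simps)
  ultimately show ?thesis unfolding hK_def by simp
qed

lemma R3: assumes "d \<le> n" shows "hh n (n - d) = - hh n d"
proof -
  have e: "p_const^(n-d) * q_const^(n-d) = 1" by (simp add: pq1 flip: power_mult_distrib)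
  have "q_const^n = q_const^d * q_const^(n-d)" using assms by (simp flip: power_add)
  hence "q_const^n * p_const^(n-d) = q_const^d" using e by (simp add: algebra_simps)
  moreover have "q_const^(n-d) = q_const^n * p_const^d"
  proof -
    have "q_const^n * p_const^d = q_const^(n-d) * (q_const^d * p_const^d)" using assms
      by (simp add: algebra_simps flip: power_add)
    also have "\<dots> = q_const^(n-d)" by (simp add: pq1 mult.commute flip: power_mult_distrib)
    finally show ?thesis by simp
  qed
  ultimately show ?thesis unfolding hh_def by (simp add: algebra_simps)
qed

lemma L_Minv: assumes n: "n \<ge> 3" shows "L_S n * Minv n = 1\<^sub>m n"
proof (rule eq_matI)
  fix i j assume i: "i < dim_row (1\<^sub>m n :: real mat)" and j: "j < dim_col (1\<^sub>m n :: real mat)"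
  hence i: "i < n" and j: "j < n" by auto
  define f where "f k = hh n (if j \<le> k then k - j else j - k)" for k
  have LC: "L_S n \<in> carrier_mat n n" "Minv n \<in> carrier_mat n n" by (simp_all add: L_S_def Minv_def)
  have "(L_S n * Minv n) $$ (i,j) = (\<Sum>k<n. L_S n $$ (i,k) * Minv n $$ (k,j))"
    using i j LC by (simp add: scalar_prod_def atLeast0LessThan)
  also have "\<dots> = (\<Sum>k<n. L_S n $$ (i,k) * f k)"
    using j by (intro sum.cong refl) (simp add: Minv_def f_def)
  also have "\<dots> = 4 * f i - (if i+1 < n then f (i+1) else 0) - (if i > 0 then f (i-1) else 0)
     + (if i = 0 then f (n-1) else 0) + (if i = n-1 then f 0 else 0)" by (rule row_sum[OF n i])
  also have "\<dots> = (if i = j then 1 else 0)"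
  proof -
    have R1': "4 * hh n d - hh n (d - 1) - hh n (d+1) = 0" if "d \<ge> 1" for d
      using R1[of n "d-1"] that by (simp add: Suc_diff_le)
    have h1: "hh n (n-1) = - hh n 1" using R3[of 1 n] n by simp
    show ?thesis
    proof (cases "i = 0")
      case True
      show ?thesis
      proof (cases "j = 0")
        case True thus ?thesis using `i=0` n R2[of n] h1 unfolding f_def by simp
      next
        case False
        have "hh n (n - Suc j) = - hh n (j+1)" using R3[of "j+1" n] j by simp
        moreover have "j \<le> n - 1" using j by simp
        ultimately show ?thesis using `i=0` False n j R1'[of j] unfolding f_def by auto
      qed
    next
      case i0: False
      show ?thesis
      proof (cases "i = n - 1")
        case True
        show ?thesis
        proof (cases "j = n - 1")
          case True thus ?thesis using `i=n-1` n R2[of n] h1 unfolding f_def by simp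
        next
          case False
          define e where "e = n - 1 - j"
          have e1: "e \<ge> 1" using False j unfolding e_def by simp
          have "hh n j = - hh n (n - j)" using R3[of "j" n] j by simp
          moreover have "n - j = e + 1" using False j unfolding e_def by simp
          ultimately have f0: "f 0 = - hh n (e+1)" unfolding f_def by auto
          have f1: "f i = hh n e" using `i = n-1` j unfolding f_def e_def by auto
          have f2: "f (i-1) = hh n (e-1)" using `i = n-1` j False unfolding f_def e_def by auto
          have "i + 1 \<ge> n" "0 < i" "i \<noteq> j" using `i = n-1` n False by auto
          hence "4 * f i - (if i+1 < n then f (i+1) else 0) - (if i > 0 then f (i-1) else 0)
             + (if i = 0 then f (n-1) else 0) + (if i = n-1 then f 0 else 0) = 4 * hh n e - hh n (e-1) - hh n (e+1)"
            using f0 f1 f2 `i = n-1` i0 by simp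
          also have "\<dots> = 0" using R1'[OF e1] .
          finally show ?thesis using `i \<noteq> j` by simp
        qed
      next
        case False
        show ?thesis
        proof (cases "j < i")
          case True
          have "Suc i < n" "j \<le> i - 1" "Suc i - j = Suc (i-j)" "i - Suc j = i - j - 1" "i - j \<ge> 1"
            using True i0 False i by auto
          thus ?thesis using True i0 False n j i R1'[of "i-j"] unfolding f_def
            by simp
        next
          case ji: False
          show ?thesis
          proof (cases "j = i")
            case True
            have "Suc i < n" "\<not> i \<le> i - 1" "Suc i - i = 1" using i0 False i by auto
            thus ?thesis using True i0 False n j i R2[of n] unfolding f_def by simp
          next
            case False
            have "Suc i < n" "Suc i \<le> j" "j - (i - 1) = Suc (j-i)" "j - Suc i = j - i - 1" "j - i \<ge> 1" "i - 1 < j"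
              using False ji i0 `i \<noteq> n-1` i by auto
            thus ?thesis using False i0 `i \<noteq> n-1` ji n j i R1'[of "j-i"] unfolding f_def
              by (cases "j = Suc i") (auto simp: numeral_2_eq_2)
          qed
        qed
      qed
    qed
  qed
  also have "\<dots> = 1\<^sub>m n $$ (i,j)" using i j by simp
  finally show "(L_S n * Minv n) $$ (i,j) = 1\<^sub>m n $$ (i,j)" .
qed (simp_all add: L_S_def Minv_def)


interpretation rp: map_poly_inj_idom_hom "of_real :: real \<Rightarrow> complex" ..

lemma real_eig_real:
  fixes A :: "real mat"
  assumes A: "A \<in> carrier_mat n n" and sym: "\<And>i j. i<n \<Longrightarrow> j<n \<Longrightarrow> A$$(i,j) = A$$(j,i)"
   and ev: "eigenvector (map_mat complex_of_real A) v a"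
  shows "Im a = 0"
proof -
  let ?C = "map_mat complex_of_real A"
  have C: "?C \<in> carrier_mat n n" using A by simp
  from ev C have v: "v \<in> carrier_vec n" "v \<noteq> 0\<^sub>v n" and e: "?C *\<^sub>v v = a \<cdot>\<^sub>v v"
    by (auto simp: eigenvector_def)
  define S where "S = (\<Sum>i<n. cnj (v$i) * (?C *\<^sub>v v)$i)"
  define N where "N = (\<Sum>i<n. (cmod (v$i))^2)"
  have S1: "S = a * of_real N"
  proof -
    have "S = (\<Sum>i<n. a * (v$i * cnj (v$i)))" unfolding S_def e using v
      by (intro sum.cong) auto
    also have "\<dots> = a * (\<Sum>i<n. complex_of_real ((cmod (v$i))^2))"
      by (simp only: complex_norm_square sum_distrib_left)
    also have "\<dots> = a * of_real N" unfolding N_def of_real_sum ..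
    finally show ?thesis .
  qed
  have S2: "S = (\<Sum>i<n. \<Sum>j<n. cnj (v$i) * of_real (A$$(i,j)) * v$j)"
    unfolding S_def using A v
    by (intro sum.cong refl) (auto simp: scalar_prod_def sum_distrib_left atLeast0LessThan mult.assoc)
  have "cnj S = (\<Sum>i<n. \<Sum>j<n. v$i * of_real (A$$(i,j)) * cnj (v$j))"
    unfolding S2 by (simp add: cnj_sum)
  also have "\<dots> = (\<Sum>j<n. \<Sum>i<n. v$i * of_real (A$$(i,j)) * cnj (v$j))"
    by (rule sum.swap)
  also have "\<dots> = S" unfolding S2 using sym
    by (intro sum.cong refl) (auto simp: mult.commute mult.left_commute)
  finally have cS: "cnj S = S" .
  have "Im S = 0" using arg_cong[OF cS, of Im] by simp
  hence "Im a * N = 0" using S1 by simp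
  moreover have "N > 0"
  proof -
    from v obtain k where k: "k < n" "v$k \<noteq> 0" by (metis eq_vecI carrier_vecD index_zero_vec)
    have "(cmod (v$k))^2 > 0" using k by simp
    also have "(cmod (v$k))^2 \<le> N" unfolding N_def
      by (rule member_le_sum) (use k in auto)
    finally show ?thesis .
  qed
  ultimately show ?thesis by simp
qed


lemma map_poly_prod_lin: "map_poly (of_real :: real \<Rightarrow> complex) (\<Prod>r\<leftarrow>rs. [:-r,1:]) = (\<Prod>r\<leftarrow>rs. [:-of_real r,1:])"
proof (induct rs)
  case (Cons r rs)
  have "map_poly (of_real :: real \<Rightarrow> complex) (\<Prod>r\<leftarrow>r # rs. [:-r,1:]) = map_poly of_real [:-r,1:] * map_poly of_real (\<Prod>r\<leftarrow>rs. [:-r,1:])"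
    by (simp only: list.map prod_list.Cons rp.hom_mult)
  also have "\<dots> = [:-of_real r,1:] * (\<Prod>r\<leftarrow>rs. [:-of_real r,1:])" using Cons by simp
  finally show ?case by simp
qed simp

lemma real_sym_split:
  fixes A :: "real mat"
  assumes A: "A \<in> carrier_mat n n" and sym: "\<And>i j. i<n \<Longrightarrow> j<n \<Longrightarrow> A$$(i,j) = A$$(j,i)"
  shows "\<exists>rs. char_poly A = (\<Prod>r\<leftarrow>rs. [:-r,1:])"
proof -
  let ?C = "map_mat complex_of_real A"
  have C: "?C \<in> carrier_mat n n" using A by simp
  from char_poly_factorized[OF C] obtain as where cp: "char_poly ?C = (\<Prod>a\<leftarrow>as. [:-a,1:])" by blast
  have re: "\<forall>a\<in>set as. Im a = 0"
  proof
    fix a assume a: "a \<in> set as"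
    have "poly (char_poly ?C) a = 0" unfolding cp using a by (rule linear_poly_root)
    hence "eigenvalue ?C a" using eigenvalue_root_char_poly[OF C] by simp
    then obtain v where "eigenvector ?C v a" unfolding eigenvalue_def by blast
    thus "Im a = 0" using real_eig_real[OF A sym] by blast
  qed
  define rs where "rs = map Re as"
  have "as = map of_real rs" unfolding rs_def using re by (induct as) (auto simp: complex_eq_iff)
  hence cpC: "char_poly ?C = (\<Prod>r\<leftarrow>rs. [:-of_real r,1:])" using cp by (simp add: o_def)
  have "map_poly of_real (char_poly A) = char_poly ?C" by (rule of_real_hom.char_poly_hom[OF A, symmetric])
  also have "\<dots> = (\<Prod>r\<leftarrow>rs. [:-of_real r,1:])" by (rule cpC)
  also have "\<dots> = map_poly of_real (\<Prod>r\<leftarrow>rs. [:-r,1:])" by (rule map_poly_prod_lin[symmetric])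
  finally have "map_poly (of_real :: real \<Rightarrow> complex) (char_poly A) = map_poly of_real (\<Prod>r\<leftarrow>rs. [:-r,1:])" .
  thus ?thesis by (auto dest: rp.injectivity)
qed

lemma proots_lin: "proots (\<Prod>r\<leftarrow>rs. [:-r,1::real:]) = mset rs"
proof (induct rs)
  case (Cons r rs)
  have "(\<Prod>r\<leftarrow>rs. [:-r,1::real:]) \<noteq> 0" by (auto simp: prod_list_zero_iff)
  have "proots (\<Prod>r\<leftarrow>r # rs. [:-r,1::real:]) = proots ([:-r,1::real:] * (\<Prod>r\<leftarrow>rs. [:-r,1::real:]))"
    by (simp only: list.map prod_list.Cons)
  also have "\<dots> = proots [:-r,1::real:] + proots (\<Prod>r\<leftarrow>rs. [:-r,1::real:])"
    by (rule proots_mult) (use \<open>(\<Prod>r\<leftarrow>rs. [:-r,1::real:]) \<noteq> 0\<close> in auto)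
  also have "\<dots> = {#r#} + mset rs" using Cons proots_linear_factor[of "-r"] by simp
  finally show ?case by simp
qed simp

lemma tri_inv:
  fixes B X :: "real mat"
  assumes B: "B \<in> carrier_mat n n" and ut: "upper_triangular B" and X: "X \<in> carrier_mat n n"
    and XB: "X * B = 1\<^sub>m n" and nz: "\<And>i. i < n \<Longrightarrow> B$$(i,i) \<noteq> 0" and i: "i < n"
  shows "X$$(i,i) * B$$(i,i) = 1"
proof -
  have ent: "(X*B)$$(i,j) = (\<Sum>k<n. X$$(i,k) * B$$(k,j))" if "i<n" "j<n" for i j
    using that B X by (simp add: scalar_prod_def atLeast0LessThan)
  have utB: "B$$(k,j) = 0" if "j < k" "k < n" for k j using ut B that unfolding upper_triangular_def by auto
  have low: "\<forall>i. j < i \<longrightarrow> i < n \<longrightarrow> X$$(i,j) = 0" for j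
  proof (induct j rule: less_induct)
    case (less j)
    show ?case
    proof (intro allI impI)
      fix i assume ji: "j < i" and i: "i < n"
      have "0 = (X*B)$$(i,j)" using XB ji i by simp
      also have "\<dots> = (\<Sum>k<n. X$$(i,k) * B$$(k,j))" using ji i by (intro ent) auto
      also have "\<dots> = (\<Sum>k<n. if k = j then X$$(i,j) * B$$(j,j) else 0)"
      proof (intro sum.cong refl)
        fix k assume "k \<in> {..<n}"
        hence k: "k < n" by simp
        show "X$$(i,k) * B$$(k,j) = (if k = j then X$$(i,j) * B$$(j,j) else 0)"
        proof (cases "k < j")
          case True thus ?thesis using less[OF True] ji i by auto
        next
          case False thus ?thesis using utB[of j k] k by auto
        qed
      qed
      also have "\<dots> = X$$(i,j) * B$$(j,j)" using ji i by (simp add: sum.delta')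
      finally show "X$$(i,j) = 0" using nz[of j] ji i by simp
    qed
  qed
  have "1 = (X*B)$$(i,i)" using XB i by simp
  also have "\<dots> = (\<Sum>k<n. X$$(i,k) * B$$(k,i))" using i by (intro ent) auto
  also have "\<dots> = (\<Sum>k<n. if k = i then X$$(i,i) * B$$(i,i) else 0)"
  proof (intro sum.cong refl)
    fix k assume "k \<in> {..<n}"
    hence k: "k < n" by simp
    show "X$$(i,k) * B$$(k,i) = (if k = i then X$$(i,i) * B$$(i,i) else 0)"
    proof (cases "k < i")
      case True thus ?thesis using low[of k] i by auto
    next
      case False thus ?thesis using utB[of i k] k by auto
    qed
  qed
  also have "\<dots> = X$$(i,i) * B$$(i,i)" using i by (simp add: sum.delta')
  finally show ?thesis by simp
qed

lemma trace_comm: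
  fixes A B :: "real mat"
  assumes A: "A \<in> carrier_mat n m" and B: "B \<in> carrier_mat m n"
  shows "(\<Sum>i<n. (A*B)$$(i,i)) = (\<Sum>k<m. (B*A)$$(k,k))"
proof -
  have "(\<Sum>i<n. (A*B)$$(i,i)) = (\<Sum>i<n. \<Sum>k<m. A$$(i,k) * B$$(k,i))"
    using A B by (intro sum.cong refl) (simp add: scalar_prod_def atLeast0LessThan)
  also have "\<dots> = (\<Sum>k<m. \<Sum>i<n. B$$(k,i) * A$$(i,k))" by (subst sum.swap) (simp add: mult.commute)
  also have "\<dots> = (\<Sum>k<m. (B*A)$$(k,k))"
    using A B by (intro sum.cong refl) (simp add: scalar_prod_def atLeast0LessThan)
  finally show ?thesis .
qed

lemma final_arith: "real n * hh n 0 =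
         real n / (2 * sqrt 3) * (p_const ^ n - q_const ^ n) / (p_const ^ n + q_const ^ n + 2)"
proof -
  have PQ: "p_const^n * q_const^n = 1" by (simp add: pq1 flip: power_mult_distrib)
  have qp: "q_const^n > 0" using q_pos by simp
  have pp: "p_const^n > 0" unfolding p_const_def by (intro zero_less_power) (simp add: add_pos_nonneg)
  have s3: "sqrt 3 > 0" by simp
  have E: "(p_const ^ n - q_const ^ n) / (p_const ^ n + q_const ^ n + 2) = (1 - q_const^n) / (1 + q_const^n)"
  proof -
    have "(p_const ^ n - q_const ^ n) * (1 + q_const^n) = (1 - q_const^n) * (p_const ^ n + q_const ^ n + 2)"
      using PQ by (simp add: algebra_simps power2_eq_square)
    thus ?thesis using qp pp by (simp add: divide_simps add_pos_pos)
  qed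
  have h0: "hh n 0 = (1 - q_const^n) / (2 * sqrt 3 * (1 + q_const^n))"
  proof -
    have "hh n 0 = - ((q_const^n - 1) / (2 * sqrt 3 * (1 + q_const^n)))" unfolding hh_def hK_def by simp
    thus ?thesis by (metis minus_diff_eq minus_divide_left)
  qed
  have "real n / (2 * sqrt 3) * (p_const ^ n - q_const ^ n) / (p_const ^ n + q_const ^ n + 2)
     = real n / (2 * sqrt 3) * ((p_const ^ n - q_const ^ n) / (p_const ^ n + q_const ^ n + 2))" by simp
  also have "\<dots> = real n / (2 * sqrt 3) * ((1 - q_const^n) / (1 + q_const^n))" unfolding E ..
  also have "\<dots> = real n * hh n 0" unfolding h0 by simp
  finally show ?thesis by simp
qed

theorem lemma3p2:
  fixes n :: nat
  assumes "n \<ge> 3"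
  shows "(\<Sum>\<beta>\<in>#eigenvalues_mset (L_S n). 1 / \<beta>) =
         real n / (2 * sqrt 3) * (p_const ^ n - q_const ^ n) / (p_const ^ n + q_const ^ n + 2)"
proof -
  let ?A = "L_S n"
  have A: "?A \<in> carrier_mat n n" by (simp add: L_S_def)
  have sym: "?A$$(i,j) = ?A$$(j,i)" if "i<n" "j<n" for i j using that unfolding L_S_def by auto
  obtain rs where cp: "char_poly ?A = (\<Prod>r\<leftarrow>rs. [:-r,1:])" using real_sym_split[OF A sym] by blast
  obtain B P Q where schur: "schur_decomposition ?A rs = (B,P,Q)" by (cases "schur_decomposition ?A rs") auto
  from schur_decomposition[OF A cp schur] have sim: "similar_mat_wit ?A B P Q"
    and ut: "upper_triangular B" and diag: "diag_mat B = rs" by auto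
  note W = similar_mat_witD2[OF A sim]
  have Bc: "B \<in> carrier_mat n n" and Pc: "P \<in> carrier_mat n n" and Qc: "Q \<in> carrier_mat n n"
    using W by auto
  define Mi where "Mi = Minv n"
  have Mc: "Mi \<in> carrier_mat n n" unfolding Mi_def Minv_def by simp
  have AM: "?A * Mi = 1\<^sub>m n" unfolding Mi_def by (rule L_Minv[OF assms])
  have MA: "Mi * ?A = 1\<^sub>m n" by (rule mat_mult_left_right_inverse[OF A Mc AM])
  have BQAP: "B = Q * (?A * P)"
  proof -
    have "Q * (?A * P) = Q * ((P * B * Q) * P)" using W by simp
    also have "\<dots> = (Q * P) * B * (Q * P)" using Bc Pc Qc by (simp add: assoc_mult_mat[of _ n n _ n _ n])
    also have "\<dots> = B" using W Bc by simp
    finally show ?thesis by simp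
  qed
  define X where "X = Q * (Mi * P)"
  have Xc: "X \<in> carrier_mat n n" unfolding X_def using Qc Mc Pc by simp
  have XB: "X * B = 1\<^sub>m n"
  proof -
    have "X * B = Q * (Mi * ((P * Q) * (?A * P)))" unfolding X_def BQAP using Bc Pc Qc Mc A
      by (simp add: assoc_mult_mat[of _ n n _ n _ n])
    also have "\<dots> = Q * ((Mi * ?A) * P)" using W Mc A Pc by (simp add: assoc_mult_mat[of _ n n _ n _ n])
    also have "\<dots> = 1\<^sub>m n" using MA W Pc by simp
    finally show ?thesis .
  qed
  have "det X * det B = 1" using det_mult[OF Xc Bc] XB by simp
  hence "det B \<noteq> 0" by auto
  hence "prod_list (diag_mat B) \<noteq> 0" using det_upper_triangular[OF ut Bc] by simp
  hence nz: "B$$(i,i) \<noteq> 0" if "i < n" for i using that Bc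
    by (auto simp: prod_list_zero_iff diag_mat_def)
  have "(\<Sum>\<beta>\<in>#eigenvalues_mset ?A. 1 / \<beta>) = (\<Sum>\<beta>\<in>#mset rs. 1 / \<beta>)"
    unfolding eigenvalues_mset_def cp proots_lin ..
  also have "\<dots> = sum_list (map (\<lambda>\<beta>. 1 / \<beta>) rs)" by (induct rs) auto
  also have "\<dots> = (\<Sum>i<n. 1 / B$$(i,i))"
    unfolding diag[symmetric] diag_mat_def using Bc
    by (simp add: sum_set_upt_conv_sum_list_nat[symmetric] atLeast0LessThan o_def)
  also have "\<dots> = (\<Sum>i<n. X$$(i,i))"
    using tri_inv[OF Bc ut Xc XB nz] nz by (intro sum.cong refl) (simp add: field_simps)
  also have "\<dots> = (\<Sum>k<n. ((Mi * P) * Q)$$(k,k))" unfolding X_def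
    by (rule trace_comm) (use Qc Mc Pc in auto)
  also have "\<dots> = (\<Sum>k<n. Mi$$(k,k))" using W Mc Pc Qc by (simp add: assoc_mult_mat[of _ n n _ n _ n])
  also have "\<dots> = real n * hh n 0" unfolding Mi_def Minv_def by simp
  also have "\<dots> = real n / (2 * sqrt 3) * (p_const ^ n - q_const ^ n) / (p_const ^ n + q_const ^ n + 2)"
    by (rule final_arith)
  finally show ?thesis .
qed

end
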